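(* Consider the dynamic load balancing game described in the context, and suppose all players follow the best-response algorithm. Then after $$t''=O\!\left(\max_j\left\lceil\frac{s_j^0}{\mu_j}\right\rceil\cdot\frac{\sum_j\mu_j+\sum_j s_j^0}{\sum_j\mu_j-\lambda_{\max}}\right)$$ iterations, the state of each server becomes zero (the system becomes load-balanced), and it remains zero thereafter. In particular, the strategies of the players converge to the pure Nash equilibrium of the static load balancing game with zero initial loads, i.e., $\lim_{t\to\infty}a_{ij}^t=\frac{\mu_j}{\sum_{k=1}^m\mu_k}$ for every player $i$ and server $j$.
   Context: Dynamic load balancing game: there are $m$ servers with service rates $\mu_j>0$ and $n$ players with job lengths $\lambda_i>0$; let $\lambda_{\max}=\max_i\lambda_i$, and assume $\lambda_{\max}<\sum_{j=1}^m\mu_j$. Time is discrete, $t=0,1,2,\dots$; the state at time $t$ is $s^t=(s_1^t,\dots,s_m^t)$, $s_j^t\ge0$ the load on server $j$, with given initial state $s^0$. At each time $t$ exactly one player $i$ receives a new job of length $\lambda_i$ and immediately chooses $a_i^t$ in the simplex $\{a:\sum_ja_j=1,a_j\ge0\}$, incurring cost $$D_i(a^t,s^t)=\sum_{j=1}^m\lambda_i a_{ij}^t\left(\frac{\lambda_i a_{ij}^t}{2\mu_j}+\frac{s_j^t}{\mu_j}\right),$$ after which $s_j^{t+1}=\max\{0,\ s_j^t+\lambda_i a_{ij}^t-\mu_j\}$ for all $j$. Best-response algorithm: the player receiving the job at time $t$ chooses $a_i^t$ as the unique minimizer of $D_i(a_i,s^t)$ over the simplex. The static load balancing game with zero initial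 loads is the game in which each player $i$ chooses $a_i$ in the simplex to minimize $\sum_j\lambda_ia_{ij}\big(\frac{\lambda_ia_{ij}}{2\mu_j}+\frac{\sum_{k\ne i}\lambda_ka_{kj}}{\mu_j}\big)$. *)

theory Defs
  imports Complex_Main
begin

text \<open>Servers are indexed by {..<m}, players by {..<n}. Strategies are functions
  nat => real, required to vanish outside the server set.\<close>

definition simplex :: "nat \<Rightarrow> (nat \<Rightarrow> real) set" where
  "simplex m = {a. (\<forall>j<m. a j \<ge> 0) \<and> (\<forall>j\<ge>m. a j = 0) \<and> (\<Sum>j<m. a j) = 1}"

definition dyn_cost :: "nat \<Rightarrow> (nat \<Rightarrow> real) \<Rightarrow> real \<Rightarrow> (nat \<Rightarrow> real) \<Rightarrow> (nat \<Rightarrow> real) \<Rightarrow> real" where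
  "dyn_cost m mu lam a s = (\<Sum>j<m. lam * a j * (lam * a j / (2 * mu j) + s j / mu j))"

text \<open>Best response: the (unique) minimizer of the dynamic cost over the simplex.\<close>
definition best_resp :: "nat \<Rightarrow> (nat \<Rightarrow> real) \<Rightarrow> real \<Rightarrow> (nat \<Rightarrow> real) \<Rightarrow> (nat \<Rightarrow> real)" where
  "best_resp m mu lam s =
     (THE a. a \<in> simplex m \<and> (\<forall>b\<in>simplex m. dyn_cost m mu lam a s \<le> dyn_cost m mu lam b s))"

text \<open>State trajectory under best responses; p t is the player receiving the job at time t.\<close>
fun br_state :: "nat \<Rightarrow> (nat \<Rightarrow> real) \<Rightarrow> (nat \<Rightarrow> real) \<Rightarrow> (nat \<Rightarrow> nat) \<Rightarrow> (nat \<Rightarrow> real)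
                  \<Rightarrow> nat \<Rightarrow> (nat \<Rightarrow> real)" where
  "br_state m mu lam p s0 0 = s0"
| "br_state m mu lam p s0 (Suc t) =
     (let s = br_state m mu lam p s0 t; a = best_resp m mu (lam (p t)) s
      in (\<lambda>j. max 0 (s j + lam (p t) * a j - mu j)))"

definition br_action :: "nat \<Rightarrow> (nat \<Rightarrow> real) \<Rightarrow> (nat \<Rightarrow> real) \<Rightarrow> (nat \<Rightarrow> nat) \<Rightarrow> (nat \<Rightarrow> real)
                  \<Rightarrow> nat \<Rightarrow> (nat \<Rightarrow> real)" where
  "br_action m mu lam p s0 t = best_resp m mu (lam (p t)) (br_state m mu lam p s0 t)"

definition static_cost :: "nat \<Rightarrow> nat \<Rightarrow> (nat \<Rightarrow> real) \<Rightarrow> (nat \<Rightarrow> real) \<Rightarrow> (nat \<Rightarrow> nat \<Rightarrow> real)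
                            \<Rightarrow> nat \<Rightarrow> real" where
  "static_cost m n mu lam a i =
     (\<Sum>j<m. lam i * a i j * (lam i * a i j / (2 * mu j)
              + (\<Sum>k\<in>{..<n}-{i}. lam k * a k j) / mu j))"

definition static_nash :: "nat \<Rightarrow> nat \<Rightarrow> (nat \<Rightarrow> real) \<Rightarrow> (nat \<Rightarrow> real) \<Rightarrow> (nat \<Rightarrow> nat \<Rightarrow> real) \<Rightarrow> bool" where
  "static_nash m n mu lam a \<longleftrightarrow>
     (\<forall>i<n. a i \<in> simplex m \<and>
        (\<forall>b\<in>simplex m. static_cost m n mu lam a i \<le> static_cost m n mu lam (a(i := b)) i))"

end

theory Submission imports Defs begin

lemma kkt_min:
  assumes a: "a \<in> simplex m" and mu: "\<forall>j<m. mu j > 0" and lam: "lam > 0"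
  and kkt: "\<forall>j<m. lam * a j + s j \<ge> w * mu j \<and> (a j > 0 \<longrightarrow> lam * a j + s j = w * mu j)"
  and b: "b \<in> simplex m"
  shows "dyn_cost m mu lam b s - dyn_cost m mu lam a s \<ge> (\<Sum>j<m. lam^2 * (b j - a j)^2 / (2 * mu j))"
proof -
  have termw: "lam * b j * (lam * b j / (2 * mu j) + s j / mu j) - lam * a j * (lam * a j / (2 * mu j) + s j / mu j)
     \<ge> lam * w * (b j - a j) + lam^2 * (b j - a j)^2 / (2 * mu j)" if j: "j<m" for j
  proof -
    have mj: "mu j > 0" using mu j by auto
    have eq: "lam * b j * (lam * b j / (2 * mu j) + s j / mu j) - lam * a j * (lam * a j / (2 * mu j) + s j / mu j)
      = lam * ((b j - a j) * ((lam * a j + s j) / mu j)) + lam^2 * (b j - a j)^2/(2*mu j)"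
      using mj by (simp add: field_simps power2_eq_square)
    have "(b j - a j) * ((lam * a j + s j) / mu j) \<ge> (b j - a j) * w"
    proof (cases "a j > 0")
      case True
      then have "(lam * a j + s j) / mu j = w" using kkt j mj by auto
      then show ?thesis by simp
    next
      case False
      then have a0: "a j = 0" using a j unfolding simplex_def by force
      have "b j \<ge> 0" using b j unfolding simplex_def by auto
      moreover have "(lam * a j + s j) / mu j \<ge> w" using kkt j mj by (simp add: pos_le_divide_eq)
      ultimately have "b j * w \<le> b j * ((lam * a j + s j) / mu j)" by (rule mult_left_mono[rotated])
      then show ?thesis using a0 by simp
    qed
    then have "lam * ((b j - a j) * ((lam * a j + s j) / mu j)) \<ge> lam * ((b j - a j) * w)"
      using lam by (meson less_imp_le mult_left_mono)
    then show ?thesis unfolding eq by (simp add: algebra_simps)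
  qed
  have "dyn_cost m mu lam b s - dyn_cost m mu lam a s = (\<Sum>j<m. lam * b j * (lam * b j / (2 * mu j) + s j / mu j) - lam * a j * (lam * a j / (2 * mu j) + s j / mu j))"
    unfolding dyn_cost_def by (simp add: sum_subtractf)
  also have "\<dots> \<ge> (\<Sum>j<m. lam * w * (b j - a j) + lam^2 * (b j - a j)^2 / (2 * mu j))"
    by (rule sum_mono) (use termw in auto)
  moreover have "(\<Sum>j<m. lam * w * (b j - a j) + lam^2 * (b j - a j)^2 / (2 * mu j))
      = lam * w * ((\<Sum>j<m. b j) - (\<Sum>j<m. a j)) + (\<Sum>j<m. lam^2 * (b j - a j)^2 / (2 * mu j))"
    by (simp add: sum.distrib sum_distrib_left sum_subtractf right_diff_distrib)
  moreover have "(\<Sum>j<m. b j) = 1" "(\<Sum>j<m. a j) = 1" using a b unfolding simplex_def by auto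
  ultimately show ?thesis by simp
qed

lemma kkt_best:
  assumes a: "a \<in> simplex m" and mu: "\<forall>j<m. mu j > 0" and lam: "lam > 0"
  and kkt: "\<forall>j<m. lam * a j + s j \<ge> w * mu j \<and> (a j > 0 \<longrightarrow> lam * a j + s j = w * mu j)"
  shows "best_resp m mu lam s = a" and "\<forall>b\<in>simplex m. dyn_cost m mu lam a s \<le> dyn_cost m mu lam b s"
proof -
  have nn: "(\<Sum>j<m. lam^2 * (b j - a j)^2 / (2 * mu j)) \<ge> 0" for b
    by (rule sum_nonneg) (use mu in auto)
  show opt: "\<forall>b\<in>simplex m. dyn_cost m mu lam a s \<le> dyn_cost m mu lam b s"
    using kkt_min[OF a mu lam kkt] nn by (meson diff_ge_0_iff_ge order_trans)
  show "best_resp m mu lam s = a"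
    unfolding best_resp_def
  proof (rule the_equality)
    show "a \<in> simplex m \<and> (\<forall>b\<in>simplex m. dyn_cost m mu lam a s \<le> dyn_cost m mu lam b s)"
      using a opt by auto
  next
    fix b assume h: "b \<in> simplex m \<and> (\<forall>c\<in>simplex m. dyn_cost m mu lam b s \<le> dyn_cost m mu lam c s)"
    then have bs: "b \<in> simplex m" and le: "dyn_cost m mu lam b s \<le> dyn_cost m mu lam a s" using a by auto
    have "(\<Sum>j<m. lam^2 * (b j - a j)^2 / (2 * mu j)) \<le> 0"
      using kkt_min[OF a mu lam kkt bs] le by linarith
    then have z: "(\<Sum>j<m. lam^2 * (b j - a j)^2 / (2 * mu j)) = 0" using nn[of b] by linarith
    have nn2: "\<forall>j\<in>{..<m}. lam^2 * (b j - a j)^2 / (2 * mu j) \<ge> 0" using mu by auto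
    have "\<forall>j\<in>{..<m}. lam^2 * (b j - a j)^2 / (2 * mu j) = 0"
      using sum_nonneg_eq_0_iff[THEN iffD1, OF _ _ z] nn2 by blast
    then have "\<forall>j<m. b j = a j" using mu lam by force
    moreover have "\<forall>j\<ge>m. b j = a j" using a bs unfolding simplex_def by auto
    ultimately show "b = a" by (metis le_less_linear ext)
  qed
qed


lemma br_exists:
  assumes m: "m \<ge> 1" and mu: "\<forall>j<m. mu j > 0" and lam: "lam > 0" and s: "\<forall>j<m. s j \<ge> 0"
  shows "\<exists>w. (\<forall>j<m. s j + lam * best_resp m mu lam s j = max (s j) (w * mu j))
           \<and> (\<Sum>j<m. max (s j) (w * mu j)) = (\<Sum>j<m. s j) + lam"
proof -
  define f where "f = (\<lambda>w. \<Sum>j<m. max (s j) (w * mu j))"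
  define M where "M = (\<Sum>j<m. mu j)"
  define S where "S = (\<Sum>j<m. s j)"
  have Mpos: "M > 0" unfolding M_def using m mu by (intro sum_pos) (auto simp: lessThan_empty_iff)
  have S0: "S \<ge> 0" unfolding S_def using s by (intro sum_nonneg) auto
  have f0: "f 0 = S" unfolding f_def S_def using s by (intro sum.cong) auto
  define W where "W = (S + lam) / M"
  have "f W \<ge> (\<Sum>j<m. W * mu j)" unfolding f_def by (rule sum_mono) auto
  also have "(\<Sum>j<m. W * mu j) = W * M" by (simp add: sum_distrib_left M_def)
  also have "W * M = S + lam" unfolding W_def using Mpos by simp
  finally have fW: "f W \<ge> S + lam" .
  have W0: "W \<ge> 0" unfolding W_def using S0 lam Mpos by simp
  have cont: "continuous_on {0..W} f" unfolding f_def by (intro continuous_intros)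
  obtain w where w: "f w = S + lam" using IVT'[of f 0 "S + lam" W, OF _ fW W0 cont] f0 lam by auto
  define a where "a = (\<lambda>j. if j < m then (max (s j) (w * mu j) - s j) / lam else 0)"
  have asum: "(\<Sum>j<m. a j) = 1"
  proof -
    have "(\<Sum>j<m. a j) = (\<Sum>j<m. (max (s j) (w * mu j) - s j)) / lam"
      unfolding a_def by (simp add: sum_divide_distrib)
    also have "\<dots> = (f w - S) / lam" unfolding f_def S_def by (simp add: sum_subtractf)
    finally show ?thesis using w lam by simp
  qed
  have asimp: "a \<in> simplex m" unfolding simplex_def using asum lam by (auto simp: a_def)
  have aeq: "\<forall>j<m. lam * a j + s j = max (s j) (w * mu j)" using lam by (auto simp: a_def)
  have kkt: "\<forall>j<m. lam * a j + s j \<ge> w * mu j \<and> (a j > 0 \<longrightarrow> lam * a j + s j = w * mu j)"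
  proof (intro allI impI conjI)
    fix j assume j: "j < m"
    show "lam * a j + s j \<ge> w * mu j" using aeq j by simp
    assume "a j > 0"
    then have "max (s j) (w * mu j) > s j" using j lam by (auto simp: a_def zero_less_divide_iff)
    then show "lam * a j + s j = w * mu j" using aeq j by (simp add: max_def split: if_splits)
  qed
  have "best_resp m mu lam s = a" using kkt_best(1)[OF asimp mu lam kkt] .
  moreover have "\<forall>j<m. s j + lam * a j = max (s j) (w * mu j)" using aeq by (simp add: add.commute)
  ultimately show ?thesis using w unfolding f_def S_def by (intro exI[of _ w]) simp
qed

lemma step_bound:
  assumes m: "m \<ge> 1" and mu: "\<forall>j<m. mu j > 0" and lam: "lam > 0" and s: "\<forall>j<m. s j \<ge> 0"
    and sB: "\<forall>j<m. s j \<le> B * mu j" and B: "B \<ge> 0" and L: "lam \<le> L" and LM: "L < (\<Sum>j<m. mu j)"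
  shows "\<forall>j<m. max 0 (s j + lam * best_resp m mu lam s j - mu j)
            \<le> max 0 (B - ((\<Sum>j<m. mu j) - L) / (\<Sum>j<m. mu j)) * mu j"
proof -
  define M where "M = (\<Sum>j<m. mu j)"
  define d where "d = (M - L) / M"
  have Mpos: "M > 0" unfolding M_def using m mu by (intro sum_pos) (auto simp: lessThan_empty_iff)
  have d1: "d \<le> 1" unfolding d_def using Mpos L lam by (simp add: divide_le_eq_1)
  obtain w where w1: "\<forall>j<m. s j + lam * best_resp m mu lam s j = max (s j) (w * mu j)"
    and w2: "(\<Sum>j<m. max (s j) (w * mu j)) = (\<Sum>j<m. s j) + lam"
    using br_exists[OF m mu lam s] by blast
  have main: "max 0 (max (s j) (w * mu j) - mu j) \<le> max 0 (B - d) * mu j" if j: "j < m" for j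
  proof (cases "w \<le> B")
    case True
    have mj: "mu j > 0" using mu j by auto
    have "max (s j) (w * mu j) \<le> B * mu j" using sB j True mj by (auto intro: mult_right_mono)
    moreover have "d * mu j \<le> 1 * mu j" using mult_right_mono[OF d1, of "mu j"] mj by simp
    moreover have "(B - d) * mu j = B * mu j - d * mu j" by (simp add: left_diff_distrib)
    ultimately have "max (s j) (w * mu j) - mu j \<le> (B - d) * mu j" by linarith
    moreover have "(B - d) * mu j \<le> max 0 (B - d) * mu j" using mj by (simp add: mult_right_mono)
    moreover have "0 \<le> max 0 (B - d) * mu j" using mj by simp
    ultimately show ?thesis by simp
  next
    case False
    have all: "\<forall>k<m. max (s k) (w * mu k) = w * mu k"
    proof (intro allI impI)
      fix k assume k: "k < m"
      have "s k \<le> B * mu k" using sB k by auto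
      also have "\<dots> \<le> w * mu k" using False mu k by (simp add: mult_right_mono)
      finally show "max (s k) (w * mu k) = w * mu k" by simp
    qed
    have "(\<Sum>j<m. max (s j) (w * mu j)) = w * M" unfolding M_def
      using all by (simp add: sum_distrib_left)
    moreover have "(\<Sum>j<m. s j) \<le> (\<Sum>j<m. B * mu j)" by (rule sum_mono) (use sB in auto)
    moreover have "(\<Sum>j<m. B * mu j) = B * M" by (simp add: sum_distrib_left M_def)
    ultimately have "w * M \<le> B * M + L" using w2 L by linarith
    then have "w \<le> B + L / M" using Mpos by (simp add: field_simps)
    then have wd: "w - 1 \<le> B - d" unfolding d_def using Mpos by (simp add: field_simps)
    have mj: "mu j > 0" using mu j by auto
    have "max (s j) (w * mu j) - mu j = (w - 1) * mu j" using all j by (simp add: algebra_simps)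
    also have "\<dots> \<le> max 0 (B - d) * mu j" using wd mj by (intro mult_right_mono) auto
    finally show ?thesis using mj by simp
  qed
  show ?thesis
  proof (intro allI impI)
    fix j assume j: "j < m"
    have "s j + lam * best_resp m mu lam s j - mu j = max (s j) (w * mu j) - mu j" using w1 j by simp
    then show "max 0 (s j + lam * best_resp m mu lam s j - mu j)
            \<le> max 0 (B - ((\<Sum>j<m. mu j) - L) / (\<Sum>j<m. mu j)) * mu j"
      using main[OF j] unfolding d_def M_def by simp
  qed
qed


lemma unif_simplex:
  assumes m: "m \<ge> 1" and mu: "\<forall>j<m. mu j > 0"
  shows "(\<lambda>j. if j < m then mu j / (\<Sum>k<m. mu k) else 0) \<in> simplex m"
proof -
  have Mpos: "(\<Sum>k<m. mu k) > 0" using m mu by (intro sum_pos) (auto simp: lessThan_empty_iff)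
  have "(\<Sum>j<m. (if j < m then mu j / (\<Sum>k<m. mu k) else 0)) = (\<Sum>j<m. mu j / (\<Sum>k<m. mu k))"
    by (rule sum.cong) auto
  also have "\<dots> = 1" using Mpos by (simp add: sum_divide_distrib[symmetric])
  finally show ?thesis unfolding simplex_def using mu Mpos by auto
qed

lemma zero_state_br:
  assumes m: "m \<ge> 1" and mu: "\<forall>j<m. mu j > 0" and lam: "lam > 0" and s: "\<forall>j<m. s j = 0"
  shows "best_resp m mu lam s = (\<lambda>j. if j < m then mu j / (\<Sum>k<m. mu k) else 0)"
proof -
  have Mpos: "(\<Sum>k<m. mu k) > 0" using m mu by (intro sum_pos) (auto simp: lessThan_empty_iff)
  show ?thesis
  proof (rule kkt_best(1)[OF unif_simplex[OF m mu] mu lam, where w = "lam / (\<Sum>k<m. mu k)"])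
    show "\<forall>j<m. lam / (\<Sum>k<m. mu k) * mu j \<le> lam * (if j < m then mu j / (\<Sum>k<m. mu k) else 0) + s j \<and>
        (0 < (if j < m then mu j / (\<Sum>k<m. mu k) else 0) \<longrightarrow>
         lam * (if j < m then mu j / (\<Sum>k<m. mu k) else 0) + s j = lam / (\<Sum>k<m. mu k) * mu j)"
      using s by auto
  qed
qed

lemma nash_part:
  assumes m: "m \<ge> 1" and mu: "\<forall>j<m. mu j > 0" and lam: "\<forall>i<n. lam i > 0"
  shows "static_nash m n mu lam (\<lambda>i j. if j < m then mu j / (\<Sum>k<m. mu k) else 0)"
  unfolding static_nash_def
proof (intro allI impI conjI ballI)
  define M where "M = (\<Sum>k<m. mu k)"
  define A where "A = (\<lambda>(i::nat) j. if j < m then mu j / M else 0)"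
  have Mpos: "M > 0" unfolding M_def using m mu by (intro sum_pos) (auto simp: lessThan_empty_iff)
  fix i assume i: "i < n"
  show "(\<lambda>j. if j < m then mu j / (\<Sum>k<m. mu k) else 0) \<in> simplex m" using unif_simplex[OF m mu] .
  fix b assume b: "b \<in> simplex m"
  define c where "c = (\<Sum>k\<in>{..<n}-{i}. lam k)"
  define sL where "sL = (\<lambda>j. c * mu j / M)"
  have c0: "c \<ge> 0" unfolding c_def using lam by (intro sum_nonneg) auto
  have inner: "(\<Sum>k\<in>{..<n}-{i}. lam k * (A(i:=b')) k j) = sL j" if j: "j < m" for j b'
  proof -
    have "(\<Sum>k\<in>{..<n}-{i}. lam k * (A(i:=b')) k j) = (\<Sum>k\<in>{..<n}-{i}. lam k * (mu j / M))"
      by (rule sum.cong) (auto simp: A_def j)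
    also have "\<dots> = sL j" unfolding sL_def c_def by (simp add: sum_distrib_right sum_divide_distrib)
    finally show ?thesis .
  qed
  have eqc: "static_cost m n mu lam (A(i:=b')) i = dyn_cost m mu (lam i) b' sL" for b'
    unfolding static_cost_def dyn_cost_def
    by (rule sum.cong) (use inner in auto)
  have Ai: "A(i := A i) = A" by simp
  have li: "lam i > 0" using lam i by auto
  have opt: "\<forall>b\<in>simplex m. dyn_cost m mu (lam i) (A i) sL \<le> dyn_cost m mu (lam i) b sL"
  proof (rule kkt_best(2)[OF _ mu li, where w = "(lam i + c) / M"])
    show "A i \<in> simplex m" using unif_simplex[OF m mu] unfolding A_def M_def .
    show "\<forall>j<m. (lam i + c) / M * mu j \<le> lam i * A i j + sL j \<and>
        (0 < A i j \<longrightarrow> lam i * A i j + sL j = (lam i + c) / M * mu j)"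
      unfolding A_def sL_def by (auto simp: add_divide_distrib distrib_right)
  qed
  have "static_cost m n mu lam A i \<le> static_cost m n mu lam (A(i := b)) i"
    using opt b eqc[of "A i"] eqc[of b] Ai by simp
  then show "static_cost m n mu lam (\<lambda>i j. if j < m then mu j / (\<Sum>k<m. mu k) else 0) i
         \<le> static_cost m n mu lam ((\<lambda>i j. if j < m then mu j / (\<Sum>k<m. mu k) else 0)(i := b)) i"
    unfolding A_def M_def .
qed


lemma main_part:
  assumes m1: "m \<ge> 1" and n1: "n \<ge> 1" and mu: "\<forall>j<m. mu j > 0" and lam: "\<forall>i<n. lam i > 0"
    and s0: "\<forall>j<m. s0 j \<ge> 0" and p: "\<forall>t. p t < n" and LM: "Max (lam ` {..<n}) < (\<Sum>j<m. mu j)"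
  shows "(\<forall>t::nat. real t \<ge> 1 * Max ((\<lambda>j. real_of_int \<lceil>s0 j / mu j\<rceil>) ` {..<m})
                     * ((\<Sum>j<m. mu j) + (\<Sum>j<m. s0 j)) / ((\<Sum>j<m. mu j) - Max (lam ` {..<n}))
           \<longrightarrow> (\<forall>j<m. br_state m mu lam p s0 t j = 0))
     \<and> (\<forall>j<m. (\<lambda>t. br_action m mu lam p s0 t j) \<longlonglongrightarrow> mu j / (\<Sum>k<m. mu k))"
proof -
  define M where "M = (\<Sum>j<m. mu j)"
  define L where "L = Max (lam ` {..<n})"
  define d where "d = (M - L) / M"
  define K where "K = Max ((\<lambda>j. real_of_int \<lceil>s0 j / mu j\<rceil>) ` {..<m})"
  define S0 where "S0 = (\<Sum>j<m. s0 j)"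
  define st where "st = br_state m mu lam p s0"
  have Mpos: "M > 0" unfolding M_def using m1 mu by (intro sum_pos) (auto simp: lessThan_empty_iff)
  have lamL: "lam i \<le> L" if "i < n" for i unfolding L_def using that by (intro Max_ge) auto
  have LM': "L < M" using LM unfolding L_def M_def .
  have Lpos: "L > 0" using lamL[of 0] lam n1 by force
  have dpos: "d > 0" unfolding d_def using LM' Mpos by simp
  have Kge: "real_of_int \<lceil>s0 j / mu j\<rceil> \<le> K" if "j < m" for j unfolding K_def using that by (intro Max_ge) auto
  have K0: "K \<ge> 0"
  proof -
    have m0: "0 < m" using m1 by simp
    have "0 \<le> s0 0 / mu 0" using s0[rule_format, OF m0] mu[rule_format, OF m0] by simp
    also have "\<dots> \<le> real_of_int \<lceil>s0 0 / mu 0\<rceil>" by (rule le_of_int_ceiling)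
    also have "\<dots> \<le> K" using Kge[of 0] m1 by simp
    finally show ?thesis .
  qed
  have sK: "s0 j \<le> K * mu j" if j: "j < m" for j
  proof -
    have "s0 j / mu j \<le> K" using Kge[OF j] le_of_int_ceiling order_trans by blast
    then show ?thesis using mu j by (simp add: pos_divide_le_eq)
  qed
  have S00: "S0 \<ge> 0" unfolding S0_def using s0 by (intro sum_nonneg) auto
  have inv: "\<forall>j<m. 0 \<le> st t j \<and> st t j \<le> max 0 (K - real t * d) * mu j" for t
  proof (induction t)
    case 0
    then show ?case using s0 sK K0 by (simp add: st_def max_absorb2)
  next
    case (Suc t)
    have pt: "p t < n" using p by auto
    have B: "\<forall>j<m. max 0 (st t j + lam (p t) * best_resp m mu (lam (p t)) (st t) j - mu j)
            \<le> max 0 (max 0 (K - real t * d) - ((\<Sum>j<m. mu j) - L) / (\<Sum>j<m. mu j)) * mu j"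
      by (rule step_bound[OF m1 mu]) (use Suc.IH lam pt lamL[OF pt] LM' in \<open>auto simp: M_def\<close>)
    have eqm: "max 0 (max 0 (K - real t * d) - d) = max 0 (K - real (Suc t) * d)"
    proof -
      have e: "K - real t * d - d = K - real (Suc t) * d" by (simp add: algebra_simps)
      have "max 0 (max 0 (K - real t * d) - d) = max 0 (K - real t * d - d)"
        using dpos by (cases "K - real t * d \<ge> 0") (auto simp: max_def)
      then show ?thesis using e by simp
    qed
    have stS: "st (Suc t) j = max 0 (st t j + lam (p t) * best_resp m mu (lam (p t)) (st t) j - mu j)" for j
      by (simp add: st_def Let_def)
    show ?case using B eqm unfolding stS d_def M_def by simp
  qed
  have zero: "\<forall>j<m. st t j = 0" if t: "real t \<ge> 1 * K * (M + S0) / (M - L)" for t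
  proof -
    have "K * M / (M - L) \<le> K * (M + S0) / (M - L)"
      using K0 S00 LM' by (intro divide_right_mono mult_left_mono) auto
    then have "K * M / (M - L) \<le> real t" using t by simp
    then have "K * M \<le> real t * (M - L)" using LM' by (simp add: pos_divide_le_eq)
    then have "K \<le> real t * d" unfolding d_def using Mpos by (simp add: field_simps)
    then have "max 0 (K - real t * d) = 0" by simp
    then show ?thesis using inv[of t] by (metis antisym mult_zero_left)
  qed
  show ?thesis
  proof
    show "\<forall>t::nat. real t \<ge> 1 * Max ((\<lambda>j. real_of_int \<lceil>s0 j / mu j\<rceil>) ` {..<m})
                     * ((\<Sum>j<m. mu j) + (\<Sum>j<m. s0 j)) / ((\<Sum>j<m. mu j) - Max (lam ` {..<n}))
           \<longrightarrow> (\<forall>j<m. br_state m mu lam p s0 t j = 0)"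
      using zero unfolding K_def M_def S0_def L_def st_def by blast
  next
    define T where "T = nat \<lceil>1 * K * (M + S0) / (M - L)\<rceil>"
    have ev: "\<forall>t\<ge>T. best_resp m mu (lam (p t)) (st t) = (\<lambda>j. if j < m then mu j / (\<Sum>k<m. mu k) else 0)"
    proof (intro allI impI)
      fix t assume "T \<le> t"
      then have "real t \<ge> 1 * K * (M + S0) / (M - L)" unfolding T_def
        using real_nat_ceiling_ge[of "1 * K * (M + S0) / (M - L)"] by (meson of_nat_le_iff order_trans)
      then have "\<forall>j<m. st t j = 0" using zero by blast
      then show "best_resp m mu (lam (p t)) (st t) = (\<lambda>j. if j < m then mu j / (\<Sum>k<m. mu k) else 0)"
        using zero_state_br[OF m1 mu] lam p by auto
    qed
    show "\<forall>j<m. (\<lambda>t. br_action m mu lam p s0 t j) \<longlonglongrightarrow> mu j / (\<Sum>k<m. mu k)"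
    proof (intro allI impI)
      fix j assume j: "j < m"
      show "(\<lambda>t. br_action m mu lam p s0 t j) \<longlonglongrightarrow> mu j / (\<Sum>k<m. mu k)"
        by (rule tendsto_eventually, rule eventually_sequentiallyI[of T])
          (use ev j in \<open>auto simp: br_action_def st_def\<close>)
    qed
  qed
qed

theorem theorem4:
  "\<exists>C>0. \<forall>(m::nat) (n::nat) (mu::nat \<Rightarrow> real) (lam::nat \<Rightarrow> real) (s0::nat \<Rightarrow> real) (p::nat \<Rightarrow> nat).
     m \<ge> 1 \<and> n \<ge> 1 \<and> (\<forall>j<m. mu j > 0) \<and> (\<forall>i<n. lam i > 0) \<and> (\<forall>j<m. s0 j \<ge> 0)
     \<and> (\<forall>t. p t < n) \<and> Max (lam ` {..<n}) < (\<Sum>j<m. mu j)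
     \<longrightarrow>
       (\<forall>t::nat. real t \<ge> C * Max ((\<lambda>j. real_of_int \<lceil>s0 j / mu j\<rceil>) ` {..<m})
                     * ((\<Sum>j<m. mu j) + (\<Sum>j<m. s0 j)) / ((\<Sum>j<m. mu j) - Max (lam ` {..<n}))
           \<longrightarrow> (\<forall>j<m. br_state m mu lam p s0 t j = 0))
     \<and> static_nash m n mu lam (\<lambda>i j. if j < m then mu j / (\<Sum>k<m. mu k) else 0)
     \<and> (\<forall>j<m. (\<lambda>t. br_action m mu lam p s0 t j) \<longlonglongrightarrow> mu j / (\<Sum>k<m. mu k))"
proof (rule exI[of _ "1::real"], rule conjI, simp, intro allI impI)
  fix m n :: nat and mu lam s0 :: "nat \<Rightarrow> real" and p :: "nat \<Rightarrow> nat"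
  assume H: "m \<ge> 1 \<and> n \<ge> 1 \<and> (\<forall>j<m. mu j > 0) \<and> (\<forall>i<n. lam i > 0) \<and> (\<forall>j<m. s0 j \<ge> 0)
     \<and> (\<forall>t. p t < n) \<and> Max (lam ` {..<n}) < (\<Sum>j<m. mu j)"
  then have A: "m \<ge> 1" "n \<ge> 1" "\<forall>j<m. mu j > 0" "\<forall>i<n. lam i > 0" "\<forall>j<m. s0 j \<ge> 0"
    "\<forall>t. p t < n" "Max (lam ` {..<n}) < (\<Sum>j<m. mu j)" by auto
  show "(\<forall>t::nat. real t \<ge> 1 * Max ((\<lambda>j. real_of_int \<lceil>s0 j / mu j\<rceil>) ` {..<m})
                     * ((\<Sum>j<m. mu j) + (\<Sum>j<m. s0 j)) / ((\<Sum>j<m. mu j) - Max (lam ` {..<n}))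
           \<longrightarrow> (\<forall>j<m. br_state m mu lam p s0 t j = 0))
     \<and> static_nash m n mu lam (\<lambda>i j. if j < m then mu j / (\<Sum>k<m. mu k) else 0)
     \<and> (\<forall>j<m. (\<lambda>t. br_action m mu lam p s0 t j) \<longlonglongrightarrow> mu j / (\<Sum>k<m. mu k))"
    using main_part[OF A] nash_part[OF A(1) A(3) A(4)] by blast
qed

end
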